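(* Let $A\in\mathbb{T}^{m\times n}$, $B\in\mathbb{T}^{m\times q}$ and let $P\in\mathbb{R}^{q\times n}$ be a row-stochastic matrix (nonnegative entries, each row summing to $1$). Assume every row of $B$ has at least one finite entry, every column of $A$ has at least one finite entry, and every row of $A$ has at least one finite entry. Let $F=A^\sharp\circ B\circ P$ (a self-map of $\mathbb{T}^n$) and $F^\ast=(B^\top)^\sharp\circ P\circ A^\top$ (a self-map of $\mathbb{T}^m$), i.e. $F(x)=A^\sharp(B\odot(Px))$ and $F^\ast(y)=(B^\top)^\sharp(P(A^\top\odot y))$. Then \[ \overline{\mathrm{cw}}(F^\ast) = -\,\underline{\mathrm{cw}}(F). \]
   Context: $\mathbb{T}=\mathbb{R}\cup\{-\infty\}$ with tropical operations $a\oplus b=\max(a,b)$, $a\odot b=a+b$. For a matrix $C\in\mathbb{T}^{r\times s}$ and $z\in\mathbb{T}^s$, $(C\odot z)_i=\max_k (C_{ik}+z_k)$. For $C\in\mathbb{T}^{r\times s}$, the adjoint $C^\sharp$ maps $y\in(\mathbb{R}\cup\{\pm\infty\})^r$ to the vector with entries $C^\sharp(y)_j=\min_i(-C_{ij}+y_i)$, with the convention $(+\infty)+(-\infty)=(-\infty)+(+\infty)=+\infty$. $C^\top$ is the transpose. For a real matrix $P$ and $z\in\mathbb{T}^s$, $Pz$ is the usual matrix–vector product with the convention $0\cdot(-\infty)=0$. $\mathbb{T}^n$ is ordered entrywise; for $\lambda\in\mathbb{R}$, $\lambda+z$ is entrywise addition. For a self-map $G$ of $\mathbb{T}^d$: $\overline{\mathrm{cw}}(G)=\inf\{\mu\in\mathbb{R}: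 \exists z\in\mathbb{R}^d,\ G(z)\le\mu+z\}$ and $\underline{\mathrm{cw}}(G)=\sup\{\mu\in\mathbb{R}: \exists z\in\mathbb{R}^d,\ G(z)\ge\mu+z\}$. *)

theory Defs
  imports Complex_Main "HOL-Library.Extended_Real"
begin

(* Tropical semiring T = R \<union> {-\<infinity>} is modelled inside ereal (values \<noteq> \<infinity>). Note: in ereal,
   \<infinity> + -\<infinity> = -\<infinity> + \<infinity> = \<infinity>, matching the adjoint convention,
   and 0 * -\<infinity> = 0, matching the convention for P z. *)

definition trop_mv :: "('r \<Rightarrow> 's::finite \<Rightarrow> ereal) \<Rightarrow> ('s \<Rightarrow> ereal) \<Rightarrow> ('r \<Rightarrow> ereal)" where
  "trop_mv C z = (\<lambda>i. Max (range (\<lambda>k. C i k + z k)))"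

definition trop_adj :: "('r::finite \<Rightarrow> 's \<Rightarrow> ereal) \<Rightarrow> ('r \<Rightarrow> ereal) \<Rightarrow> ('s \<Rightarrow> ereal)" where
  "trop_adj C y = (\<lambda>j. Min (range (\<lambda>i. - C i j + y i)))"

definition mtrans :: "('r \<Rightarrow> 's \<Rightarrow> 'a) \<Rightarrow> ('s \<Rightarrow> 'r \<Rightarrow> 'a)" where
  "mtrans C = (\<lambda>j i. C i j)"

definition real_mv :: "('r \<Rightarrow> 's::finite \<Rightarrow> real) \<Rightarrow> ('s \<Rightarrow> ereal) \<Rightarrow> ('r \<Rightarrow> ereal)" where
  "real_mv P z = (\<lambda>i. \<Sum>k\<in>UNIV. ereal (P i k) * z k)"

definition row_stochastic :: "('r \<Rightarrow> 's::finite \<Rightarrow> real) \<Rightarrow> bool" where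
  "row_stochastic P \<longleftrightarrow> (\<forall>i k. 0 \<le> P i k) \<and> (\<forall>i. (\<Sum>k\<in>UNIV. P i k) = 1)"

definition tropical_mat :: "('r \<Rightarrow> 's \<Rightarrow> ereal) \<Rightarrow> bool" where
  "tropical_mat C \<longleftrightarrow> (\<forall>i j. C i j \<noteq> \<infinity>)"

(* upper / lower cycle-time bounds, valued in extended reals (inf \<emptyset> = +\<infinity>, sup \<emptyset> = -\<infinity>) *)
definition cw_upper :: "(('d \<Rightarrow> ereal) \<Rightarrow> ('d \<Rightarrow> ereal)) \<Rightarrow> ereal" where
  "cw_upper G = Inf (ereal ` {\<mu>::real. \<exists>z::'d \<Rightarrow> real.
       \<forall>i. G (\<lambda>j. ereal (z j)) i \<le> ereal (\<mu> + z i)})"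

definition cw_lower :: "(('d \<Rightarrow> ereal) \<Rightarrow> ('d \<Rightarrow> ereal)) \<Rightarrow> ereal" where
  "cw_lower G = Sup (ereal ` {\<mu>::real. \<exists>z::'d \<Rightarrow> real.
       \<forall>i. G (\<lambda>j. ereal (z j)) i \<ge> ereal (\<mu> + z i)})"

end

theory Submission
  imports Defs
begin

lemma Max_range_le: "Max (range (f::'a::finite \<Rightarrow> 'b::linorder)) \<le> c \<longleftrightarrow> (\<forall>k. f k \<le> c)"
  by (simp add: Max_le_iff)
lemma le_Max_range: "c \<le> Max (range (f::'a::finite \<Rightarrow> 'b::linorder)) \<longleftrightarrow> (\<exists>k. c \<le> f k)"
  by (simp add: Max_ge_iff)
lemma Min_range_le: "Min (range (f::'a::finite \<Rightarrow> 'b::linorder)) \<le> c \<longleftrightarrow> (\<exists>k. f k \<le> c)"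
  by (simp add: Min_le_iff)
lemma le_Min_range: "c \<le> Min (range (f::'a::finite \<Rightarrow> 'b::linorder)) \<longleftrightarrow> (\<forall>k. c \<le> f k)"
  by (simp add: Min_ge_iff)

lemma rmv: "real_mv P (\<lambda>j. ereal (z j)) = (\<lambda>k. ereal (\<Sum>j\<in>UNIV. P k j * z j))"
  unfolding real_mv_def by simp

lemma maxfin:
  fixes C :: "'s::finite \<Rightarrow> ereal"
  assumes "\<forall>k. C k \<noteq> \<infinity>" "\<exists>k. C k \<noteq> -\<infinity>"
  shows "\<exists>k c. C k = ereal c \<and> Max (range (\<lambda>k. C k + ereal (z k))) = ereal (c + z k)"
proof -
  have "Max (range (\<lambda>k. C k + ereal (z k))) \<in> range (\<lambda>k. C k + ereal (z k))"
    by (rule Max_in) auto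
  then obtain k0 where k0: "Max (range (\<lambda>k. C k + ereal (z k))) = C k0 + ereal (z k0)" by (blast elim: rangeE)
  obtain k1 where k1: "C k1 \<noteq> -\<infinity>" using assms by auto
  have le: "C k1 + ereal (z k1) \<le> C k0 + ereal (z k0)"
    using Max_ge[of "range (\<lambda>k. C k + ereal (z k))" "C k1 + ereal (z k1)"] k0 by simp
  show ?thesis
  proof (cases "C k0")
    case (real c) then show ?thesis using k0 by auto
  next
    case PInf then show ?thesis using assms by auto
  next
    case MInf then show ?thesis using le k1 assms(1)
      by (cases "C k1") auto
  qed
qed

theorem mainTheorem2:
  fixes A :: "'m::finite \<Rightarrow> 'n::finite \<Rightarrow> ereal"
    and B :: "'m \<Rightarrow> 'q::finite \<Rightarrow> ereal"
    and P :: "'q \<Rightarrow> 'n \<Rightarrow> real"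
  assumes "tropical_mat A" and "tropical_mat B"
    and "row_stochastic P"
    and "\<forall>i. \<exists>k. B i k \<noteq> -\<infinity>"
    and "\<forall>j. \<exists>i. A i j \<noteq> -\<infinity>"
    and "\<forall>i. \<exists>j. A i j \<noteq> -\<infinity>"
  shows "cw_upper (\<lambda>y. trop_adj (mtrans B) (real_mv P (trop_mv (mtrans A) y)))
         = - cw_lower (\<lambda>x. trop_adj A (trop_mv B (real_mv P x)))"
proof -
  have Ainf: "\<And>i j. A i j \<noteq> \<infinity>" and Binf: "\<And>i k. B i k \<noteq> \<infinity>"
    using assms(1,2) unfolding tropical_mat_def by auto
  have Pnn: "\<And>k j. 0 \<le> P k j" using assms(3) unfolding row_stochastic_def by auto
  let ?F = "\<lambda>x. trop_adj A (trop_mv B (real_mv P x))"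
  let ?G = "\<lambda>y. trop_adj (mtrans B) (real_mv P (trop_mv (mtrans A) y))"
  define SL where "SL = {l::real. \<exists>x::'n\<Rightarrow>real. \<forall>i. ?F (\<lambda>j. ereal (x j)) i \<ge> ereal (l + x i)}"
  define SU where "SU = {u::real. \<exists>z::'m\<Rightarrow>real. \<forall>i. ?G (\<lambda>j. ereal (z j)) i \<le> ereal (u + z i)}"
  have colfin: "\<exists>t. \<forall>j. Max (range (\<lambda>i. A i j + ereal (y i))) = ereal (t j)" for y :: "'m \<Rightarrow> real"
  proof -
    have "\<forall>j. \<exists>r. Max (range (\<lambda>i. A i j + ereal (y i))) = ereal r"
    proof
      fix j
      from maxfin[of "\<lambda>i. A i j" y] Ainf assms(5) show "\<exists>r. Max (range (\<lambda>i. A i j + ereal (y i))) = ereal r"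
        by blast
    qed
    then show ?thesis by (rule choice)
  qed
  have Gform: "?G (\<lambda>i. ereal (y i)) i = Min (range (\<lambda>k. - B i k + ereal (\<Sum>j\<in>UNIV. P k j * t j)))"
    if "\<forall>j. Max (range (\<lambda>i. A i j + ereal (y i))) = ereal (t j)" for y t i
  proof -
    have "trop_mv (mtrans A) (\<lambda>i. ereal (y i)) = (\<lambda>j. ereal (t j))"
      using that unfolding trop_mv_def mtrans_def by auto
    then show ?thesis unfolding trop_adj_def mtrans_def by (simp add: rmv)
  qed
  have Fform: "?F (\<lambda>j. ereal (x j)) j = Min (range (\<lambda>i. - A i j + Max (range (\<lambda>k. B i k + ereal (\<Sum>j\<in>UNIV. P k j * x j)))))"
    for x j unfolding trop_adj_def trop_mv_def by (simp add: rmv)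
  have 1: "- l \<in> SU" if "l \<in> SL" for l
  proof -
    from that obtain x where hx: "\<forall>j. ereal (l + x j) \<le> ?F (\<lambda>j. ereal (x j)) j"
      unfolding SL_def by auto
    define px where "px k = (\<Sum>j\<in>UNIV. P k j * x j)" for k
    have hx': "ereal (l + x j) \<le> - A i j + Max (range (\<lambda>k. B i k + ereal (px k)))" for i j
      using hx[rule_format, of j] unfolding Fform px_def le_Min_range by auto
    have "\<forall>i. \<exists>j a. A i j = ereal a \<and> Max (range (\<lambda>j. A i j + ereal (x j))) = ereal (a + x j)"
    proof
      fix i
      from maxfin[of "\<lambda>j. A i j" x] Ainf assms(6)
      show "\<exists>j a. A i j = ereal a \<and> Max (range (\<lambda>j. A i j + ereal (x j))) = ereal (a + x j)" by blast
    qed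
    then have "\<exists>jj. \<forall>i. \<exists>a. A i (jj i) = ereal a \<and> Max (range (\<lambda>j. A i j + ereal (x j))) = ereal (a + x (jj i))" by (rule choice)
    then obtain jj where "\<forall>i. \<exists>a. A i (jj i) = ereal a \<and> Max (range (\<lambda>j. A i j + ereal (x j))) = ereal (a + x (jj i))" by blast
    then have "\<exists>aa. \<forall>i. A i (jj i) = ereal (aa i) \<and> Max (range (\<lambda>j. A i j + ereal (x j))) = ereal (aa i + x (jj i))" by (rule choice)
    then obtain jj aa where hja: "\<And>i. A i (jj i) = ereal (aa i)"
      "\<And>i. Max (range (\<lambda>j. A i j + ereal (x j))) = ereal (aa i + x (jj i))" by blast
    define s where "s i = aa i + x (jj i)" for i
    have sle: "A i j + ereal (x j) \<le> ereal (s i)" for i j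
      using hja(2)[of i] Max_ge[of "range (\<lambda>j. A i j + ereal (x j))" "A i j + ereal (x j)"]
      unfolding s_def by auto
    obtain t where ht: "\<forall>j. Max (range (\<lambda>i. A i j + ereal (- s i))) = ereal (t j)"
      using colfin[of "\<lambda>i. - s i"] by blast
    have tle: "t j \<le> - x j" for j
    proof -
      have "\<forall>i. A i j + ereal (- s i) \<le> ereal (- x j)"
      proof
        fix i
        show "A i j + ereal (- s i) \<le> ereal (- x j)"
          using sle[of i j] Ainf[of i j] by (cases "A i j") auto
      qed
      then have "Max (range (\<lambda>i. A i j + ereal (- s i))) \<le> ereal (- x j)"
        unfolding Max_range_le by blast
      then show ?thesis using ht by auto
    qed
    have "\<forall>i. ?G (\<lambda>j. ereal (- s j)) i \<le> ereal (- l + - s i)"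
    proof
      fix i
      let ?M = "Max (range (\<lambda>k. B i k + ereal (px k)))"
      have "?M \<in> range (\<lambda>k. B i k + ereal (px k))" by (rule Max_in) auto
      then obtain k where k: "?M = B i k + ereal (px k)" by (blast elim: rangeE)
      have h1: "ereal (l + x (jj i)) \<le> ereal (- aa i) + (B i k + ereal (px k))"
        using hx'[where i=i and j="jj i"] hja(1)[of i] k by simp
      then obtain b where b: "B i k = ereal b" "l + x (jj i) \<le> - aa i + b + px k"
        using Binf[of i k] by (cases "B i k") auto
      have sm: "(\<Sum>j\<in>UNIV. P k j * t j) \<le> (\<Sum>j\<in>UNIV. P k j * (- x j))"
        by (rule sum_mono) (metis mult_left_mono Pnn tle)
      have "(\<Sum>j\<in>UNIV. P k j * (- x j)) = - px k" unfolding px_def by (simp add: sum_negf)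
      with sm b have "- B i k + ereal (\<Sum>j\<in>UNIV. P k j * t j) \<le> ereal (- l + - s i)"
        unfolding s_def by simp
      then show "?G (\<lambda>j. ereal (- s j)) i \<le> ereal (- l + - s i)"
        unfolding Gform[OF ht] Min_range_le by blast
    qed
    then show ?thesis unfolding SU_def mem_Collect_eq by (rule exI[of _ "\<lambda>j. - s j"])
  qed
  have 2: "- u \<in> SL" if "u \<in> SU" for u
  proof -
    from that obtain y where hy: "\<forall>i. ?G (\<lambda>j. ereal (y j)) i \<le> ereal (u + y i)"
      unfolding SU_def by auto
    obtain t where ht: "\<forall>j. Max (range (\<lambda>i. A i j + ereal (y i))) = ereal (t j)"
      using colfin[of y] by blast
    have tge: "A i j + ereal (y i) \<le> ereal (t j)" for i j
      using ht[rule_format, of j] Max_ge[of "range (\<lambda>i. A i j + ereal (y i))" "A i j + ereal (y i)"]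
      by auto
    define T where "T k = (\<Sum>j\<in>UNIV. P k j * t j)" for k
    have hy': "\<exists>k. - B i k + ereal (T k) \<le> ereal (u + y i)" for i
      using hy[rule_format, of i] unfolding Gform[OF ht] Min_range_le T_def by blast
    have pxT: "(\<Sum>j\<in>UNIV. P k j * (- t j)) = - T k" for k
      unfolding T_def by (simp add: sum_negf)
    have "\<forall>j. ereal (- u + - t j) \<le> ?F (\<lambda>j. ereal (- t j)) j"
    proof
      fix j
      show "ereal (- u + - t j) \<le> ?F (\<lambda>j. ereal (- t j)) j"
        unfolding Fform pxT le_Min_range
      proof
        fix i
        let ?M = "Max (range (\<lambda>k. B i k + ereal (- T k)))"
        show "ereal (- u + - t j) \<le> - A i j + ?M"
        proof (cases "A i j")
          case MInf then show ?thesis by simp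
        next
          case PInf then show ?thesis using Ainf by auto
        next
          case (real a)
          obtain k where k: "- B i k + ereal (T k) \<le> ereal (u + y i)" using hy' by blast
          then obtain b where b: "B i k = ereal b" "- b + T k \<le> u + y i"
            using Binf[of i k] by (cases "B i k") auto
          have "a + y i \<le> t j" using tge[of i j] real by simp
          then have "ereal (- u + - t j) \<le> ereal (- a) + (B i k + ereal (- T k))"
            using b by simp
          also have "\<dots> \<le> ereal (- a) + ?M"
            by (rule add_left_mono) (rule Max_ge, auto)
          finally show ?thesis using real by simp
        qed
      qed
    qed
    then show ?thesis unfolding SL_def mem_Collect_eq by (rule exI[of _ "\<lambda>j. - t j"])
  qed
  have SUeq: "SU = uminus ` SL"
  proof
    show "SU \<subseteq> uminus ` SL"
    proof
      fix u assume "u \<in> SU"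
      then have "- u \<in> SL" by (rule 2)
      then show "u \<in> uminus ` SL" by (metis image_eqI minus_minus)
    qed
  next
    show "uminus ` SL \<subseteq> SU" using 1 by blast
  qed
  have "cw_upper ?G = Inf (ereal ` SU)" unfolding cw_upper_def SU_def by simp
  also have "\<dots> = Inf (uminus ` ereal ` SL)" unfolding SUeq image_image by simp
  also have "\<dots> = - Sup (ereal ` SL)" by (rule ereal_Inf_uminus_image_eq)
  also have "Sup (ereal ` SL) = cw_lower ?F" unfolding cw_lower_def SL_def by simp
  finally show ?thesis .
qed

end
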